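(* Let $n\ge 7$ and let $CU_n$ be the set of chemical unicyclic graphs on $n$ vertices. Define the following subsets of $CU_n$ (in each, all $m_{i,j}$ not listed are $0$): $\alpha_1$: $n_2=n$ (all vertices of degree 2) and $m_{2,2}=n$; $\alpha_2$: $n_4=0,n_3=1,n_2=n-2,n_1=1$, $m_{1,3}=1$, $m_{2,3}=2$, $m_{2,2}=n-3$; $\alpha_3$: $n_4=0,n_3=1,n_2=n-2,n_1=1$, $m_{1,2}=1$, $m_{2,3}=3$, $m_{2,2}=n-4$; $\alpha_9$: $n_4=0,n_3=2,n_2=n-4,n_1=2$, $m_{1,2}=2$, $m_{2,3}=4$, $m_{3,3}=1$, $m_{2,2}=n-7$. Let $G_1\in\alpha_1$, $G_2\in\alpha_3$, $G_3\in\alpha_2$, $G_4\in\alpha_9$, and let $G\in CU_n$ not belong to $\alpha_1\cup\alpha_2\cup\alpha_3\cup\alpha_9$. Then $SO(G_1)<SO(G_2)<SO(G_3)<SO(G_4)<SO(G)$.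
   Context: All graphs are simple and connected. A chemical graph is a graph with maximum degree at most $4$; a unicyclic graph is a connected graph with $n$ vertices and $n$ edges. $d_G(u)$ is the degree of $u$, $n_i$ the number of vertices of degree $i$, and $m_{i,j}$ the number of edges joining a vertex of degree $i$ to a vertex of degree $j$. The Sombor index is $SO(G)=\sum_{uv\in E(G)}\sqrt{d_G(u)^2+d_G(v)^2}$. *)

theory Defs
  imports Complex_Main
begin

definition simple_graph :: "'a set \<Rightarrow> 'a set set \<Rightarrow> bool" where
  "simple_graph V E \<longleftrightarrow> finite V \<and>
     (\<forall>e\<in>E. \<exists>u v. u \<in> V \<and> v \<in> V \<and> u \<noteq> v \<and> e = {u, v})"

definition adj :: "'a set set \<Rightarrow> 'a \<Rightarrow> 'a \<Rightarrow> bool" where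
  "adj E u v \<longleftrightarrow> {u, v} \<in> E"

definition connected_graph :: "'a set \<Rightarrow> 'a set set \<Rightarrow> bool" where
  "connected_graph V E \<longleftrightarrow> simple_graph V E \<and> V \<noteq> {} \<and>
     (\<forall>u\<in>V. \<forall>v\<in>V. (adj E)\<^sup>*\<^sup>* u v)"

definition deg :: "'a set set \<Rightarrow> 'a \<Rightarrow> nat" where
  "deg E v = card {e \<in> E. v \<in> e}"

definition chemical :: "'a set \<Rightarrow> 'a set set \<Rightarrow> bool" where
  "chemical V E \<longleftrightarrow> (\<forall>v\<in>V. deg E v \<le> 4)"

definition chem_unicyclic :: "nat \<Rightarrow> 'a set \<Rightarrow> 'a set set \<Rightarrow> bool" where
  "chem_unicyclic n V E \<longleftrightarrow> connected_graph V E \<and> card V = n \<and> card E = n \<and>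
     chemical V E"

definition nv :: "'a set \<Rightarrow> 'a set set \<Rightarrow> nat \<Rightarrow> nat" where
  "nv V E i = card {v \<in> V. deg E v = i}"

definition me :: "'a set set \<Rightarrow> nat \<Rightarrow> nat \<Rightarrow> nat" where
  "me E i j = card {e \<in> E. \<exists>u v. e = {u, v} \<and> u \<noteq> v \<and> deg E u = i \<and> deg E v = j}"

text \<open>Sombor index: for an edge e = {u,v}, the sum over w in e of d(w)^2 is
  d(u)^2 + d(v)^2.\<close>
definition sombor :: "'a set set \<Rightarrow> real" where
  "sombor E = (\<Sum>e\<in>E. sqrt (\<Sum>w\<in>e. real (deg E w) ^ 2))"

definition others_zero :: "'a set set \<Rightarrow> (nat \<times> nat) set \<Rightarrow> bool" where
  "others_zero E L \<longleftrightarrow> (\<forall>i j. i \<le> j \<longrightarrow> (i, j) \<notin> L \<longrightarrow> me E i j = 0)"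

definition alpha1 :: "nat \<Rightarrow> 'a set \<Rightarrow> 'a set set \<Rightarrow> bool" where
  "alpha1 n V E \<longleftrightarrow> chem_unicyclic n V E \<and> nv V E 2 = n \<and> me E 2 2 = n \<and>
     others_zero E {(2,2)}"

definition alpha2 :: "nat \<Rightarrow> 'a set \<Rightarrow> 'a set set \<Rightarrow> bool" where
  "alpha2 n V E \<longleftrightarrow> chem_unicyclic n V E \<and>
     nv V E 4 = 0 \<and> nv V E 3 = 1 \<and> nv V E 2 = n - 2 \<and> nv V E 1 = 1 \<and>
     me E 1 3 = 1 \<and> me E 2 3 = 2 \<and> me E 2 2 = n - 3 \<and>
     others_zero E {(1,3), (2,3), (2,2)}"

definition alpha3 :: "nat \<Rightarrow> 'a set \<Rightarrow> 'a set set \<Rightarrow> bool" where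
  "alpha3 n V E \<longleftrightarrow> chem_unicyclic n V E \<and>
     nv V E 4 = 0 \<and> nv V E 3 = 1 \<and> nv V E 2 = n - 2 \<and> nv V E 1 = 1 \<and>
     me E 1 2 = 1 \<and> me E 2 3 = 3 \<and> me E 2 2 = n - 4 \<and>
     others_zero E {(1,2), (2,3), (2,2)}"

definition alpha9 :: "nat \<Rightarrow> 'a set \<Rightarrow> 'a set set \<Rightarrow> bool" where
  "alpha9 n V E \<longleftrightarrow> chem_unicyclic n V E \<and>
     nv V E 4 = 0 \<and> nv V E 3 = 2 \<and> nv V E 2 = n - 4 \<and> nv V E 1 = 2 \<and>
     me E 1 2 = 2 \<and> me E 2 3 = 4 \<and> me E 3 3 = 1 \<and> me E 2 2 = n - 7 \<and>
     others_zero E {(1,2), (2,3), (3,3), (2,2)}"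

end

theory Submission
  imports Defs
begin

definition tau :: "'a set set \<Rightarrow> 'a set \<Rightarrow> nat \<times> nat" where
  "tau E e = (Min (deg E ` e), Max (deg E ` e))"

definition PP :: "(nat \<times> nat) set" where
  "PP = {(1,1),(1,2),(1,3),(1,4),(2,2),(2,3),(2,4),(3,3),(3,4),(4,4)}"

lemma tau_pair: "tau E {u,v} = (min (deg E u) (deg E v), max (deg E u) (deg E v))"
  by (simp add: tau_def)

locale CU =
  fixes n :: nat and V :: "'a set" and E :: "'a set set"
  assumes cu: "chem_unicyclic n V E" and n7: "n \<ge> 7"
begin

lemma sg: "simple_graph V E" using cu by (simp add: chem_unicyclic_def connected_graph_def)
lemma finV: "finite V" using sg by (simp add: simple_graph_def)
lemma EPow: "E \<subseteq> Pow V" using sg by (auto simp: simple_graph_def)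
lemma finE: "finite E" using EPow finV by (meson finite_Pow_iff finite_subset)
lemma edge: "e \<in> E \<Longrightarrow> \<exists>u v. u \<in> V \<and> v \<in> V \<and> u \<noteq> v \<and> e = {u,v}"
  using sg by (auto simp: simple_graph_def)
lemma cardV: "card V = n" using cu by (simp add: chem_unicyclic_def)
lemma cardE: "card E = n" using cu by (simp add: chem_unicyclic_def)

lemma deg_ge1: "e \<in> E \<Longrightarrow> v \<in> e \<Longrightarrow> deg E v \<ge> 1"
proof -
  assume "e \<in> E" "v \<in> e"
  then have "{x \<in> E. v \<in> x} \<noteq> {}" by auto
  moreover have "finite {x \<in> E. v \<in> x}" using finE by simp
  ultimately show ?thesis unfolding deg_def by (simp add: Suc_leI card_gt_0_iff)
qed

lemma deg_le4: "v \<in> V \<Longrightarrow> deg E v \<le> 4"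
  using cu by (simp add: chem_unicyclic_def chemical_def)

lemma deg_le4': "e \<in> E \<Longrightarrow> v \<in> e \<Longrightarrow> deg E v \<le> 4"
  using deg_le4 EPow by blast

lemma in_PP: "1 \<le> i \<Longrightarrow> i \<le> j \<Longrightarrow> j \<le> (4::nat) \<Longrightarrow> (i,j) \<in> PP"
proof -
  assume a: "1 \<le> i" "i \<le> j" "j \<le> 4"
  then have "i \<in> {1,2,3,4}" "j \<in> {1,2,3,4}" by auto
  then show ?thesis using a by (auto simp: PP_def)
qed

lemma tau_PP: "e \<in> E \<Longrightarrow> tau E e \<in> PP"
proof -
  assume e: "e \<in> E"
  then obtain u v where uv: "u \<in> V" "v \<in> V" "u \<noteq> v" "e = {u,v}" using edge by blast
  have "1 \<le> deg E u" "1 \<le> deg E v" using deg_ge1 e uv by auto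
  moreover have "deg E u \<le> 4" "deg E v \<le> 4" using deg_le4 uv by auto
  ultimately show ?thesis using uv by (auto simp: tau_pair intro!: in_PP)
qed

lemma me_eq: "i \<le> j \<Longrightarrow> me E i j = card {e \<in> E. tau E e = (i,j)}"
proof -
  assume ij: "i \<le> j"
  have "{e \<in> E. \<exists>u v. e = {u, v} \<and> u \<noteq> v \<and> deg E u = i \<and> deg E v = j} = {e \<in> E. tau E e = (i,j)}"
  proof (intro set_eqI iffI)
    fix e assume "e \<in> {e \<in> E. \<exists>u v. e = {u, v} \<and> u \<noteq> v \<and> deg E u = i \<and> deg E v = j}"
    then show "e \<in> {e \<in> E. tau E e = (i,j)}" using ij by (auto simp: tau_pair)
  next
    fix e assume a: "e \<in> {e \<in> E. tau E e = (i,j)}"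
    then obtain u v where uv: "u \<noteq> v" "e = {u,v}" using edge by blast
    show "e \<in> {e \<in> E. \<exists>u v. e = {u, v} \<and> u \<noteq> v \<and> deg E u = i \<and> deg E v = j}"
    proof (cases "deg E u \<le> deg E v")
      case True
      then show ?thesis using a uv by (auto simp: tau_pair)
    next
      case False
      then have "e = {v,u}" "deg E v \<le> deg E u" using uv by auto
      then show ?thesis using a uv by (auto simp: tau_pair min_def max_def)
    qed
  qed
  then show ?thesis unfolding me_def by simp
qed

lemma sum_PP: "(\<Sum>e\<in>E. (F (tau E e) :: 'b :: comm_semiring_1)) = (\<Sum>p\<in>PP. of_nat (me E (fst p) (snd p)) * F p)"
proof -
  have fPP: "finite PP" by (simp add: PP_def)
  have g: "tau E ` E \<subseteq> PP" using tau_PP by blast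
  have "(\<Sum>e\<in>E. F (tau E e)) = (\<Sum>p\<in>PP. \<Sum>e\<in>{x. x \<in> E \<and> tau E x = p}. F (tau E e))"
    using sum.group[OF finE fPP g, of "\<lambda>e. F (tau E e)"] by (rule sym)
  also have "\<dots> = (\<Sum>p\<in>PP. of_nat (me E (fst p) (snd p)) * F p)"
  proof (rule sum.cong[OF refl])
    fix p assume p: "p \<in> PP"
    then have le: "fst p \<le> snd p" by (auto simp: PP_def)
    have "(\<Sum>e\<in>{x. x \<in> E \<and> tau E x = p}. F (tau E e)) = (\<Sum>e\<in>{x. x \<in> E \<and> tau E x = p}. F p)"
      by simp
    also have "\<dots> = of_nat (card {x \<in> E. tau E x = p}) * F p" by simp
    also have "card {x \<in> E. tau E x = p} = me E (fst p) (snd p)" using me_eq[OF le] by simp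
    finally show "(\<Sum>e\<in>{x. x \<in> E \<and> tau E x = p}. F (tau E e)) = of_nat (me E (fst p) (snd p)) * F p" by simp
  qed
  finally show ?thesis .
qed

lemma sum_expl: "(\<Sum>e\<in>E. (F (tau E e) :: 'b :: comm_semiring_1)) =
   of_nat (me E 1 1) * F (1,1) + of_nat (me E 1 2) * F (1,2) + of_nat (me E 1 3) * F (1,3) +
   of_nat (me E 1 4) * F (1,4) + of_nat (me E 2 2) * F (2,2) + of_nat (me E 2 3) * F (2,3) +
   of_nat (me E 2 4) * F (2,4) + of_nat (me E 3 3) * F (3,3) + of_nat (me E 3 4) * F (3,4) +
   of_nat (me E 4 4) * F (4,4)"
  unfolding sum_PP by (simp add: PP_def algebra_simps)


lemma card_deg_e: "e \<in> E \<Longrightarrow> card {w \<in> e. deg E w = d} =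
   (if fst (tau E e) = d then 1 else 0) + (if snd (tau E e) = d then 1 else 0)"
proof -
  assume e: "e \<in> E"
  then obtain u v where uv: "u \<noteq> v" "e = {u,v}" using edge by blast
  show ?thesis
  proof (cases "deg E u = d"; cases "deg E v = d")
    assume a: "deg E u = d" "deg E v = d"
    then have "{w \<in> e. deg E w = d} = {u,v}" using uv by auto
    then show ?thesis using uv a by (simp add: tau_pair)
  next
    assume a: "deg E u = d" "deg E v \<noteq> d"
    then have "{w \<in> e. deg E w = d} = {u}" using uv by auto
    then show ?thesis using uv a by (auto simp: tau_pair min_def max_def)
  next
    assume a: "deg E u \<noteq> d" "deg E v = d"
    then have "{w \<in> e. deg E w = d} = {v}" using uv by auto
    then show ?thesis using uv a by (auto simp: tau_pair min_def max_def)
  next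
    assume a: "deg E u \<noteq> d" "deg E v \<noteq> d"
    then have "{w \<in> e. deg E w = d} = {}" using uv by auto
    then show ?thesis using uv a by (auto simp: tau_pair min_def max_def)
  qed
qed

lemma handshake: "(\<Sum>e\<in>E. card {w \<in> e. deg E w = d}) = d * nv V E d"
proof -
  have "(\<Sum>e\<in>E. card {w \<in> e. deg E w = d}) = (\<Sum>e\<in>E. \<Sum>v\<in>V. if v \<in> e \<and> deg E v = d then 1 else 0)"
  proof (rule sum.cong[OF refl])
    fix e assume "e \<in> E"
    then have sub: "e \<subseteq> V" using EPow by auto
    have "{w \<in> e. deg E w = d} = {v \<in> V. v \<in> e \<and> deg E v = d}" using sub by auto
    then show "card {w \<in> e. deg E w = d} = (\<Sum>v\<in>V. if v \<in> e \<and> deg E v = d then 1 else 0)"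
      using sum.inter_filter[OF finV, of "\<lambda>_. 1::nat" "\<lambda>v. v \<in> e \<and> deg E v = d"] by simp
  qed
  also have "\<dots> = (\<Sum>v\<in>V. \<Sum>e\<in>E. if v \<in> e \<and> deg E v = d then 1 else 0)" by (rule sum.swap)
  also have "\<dots> = (\<Sum>v\<in>V. if deg E v = d then d else 0)"
  proof (rule sum.cong[OF refl])
    fix v assume "v \<in> V"
    show "(\<Sum>e\<in>E. if v \<in> e \<and> deg E v = d then 1 else 0) = (if deg E v = d then d else 0)"
    proof (cases "deg E v = d")
      case True
      then have "(\<Sum>e\<in>E. if v \<in> e \<and> deg E v = d then 1 else (0::nat)) = card {e \<in> E. v \<in> e}"
        using sum.inter_filter[OF finE, of "\<lambda>_. 1::nat" "\<lambda>e. v \<in> e"] by simp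
      then show ?thesis using True by (simp add: deg_def)
    qed simp
  qed
  also have "\<dots> = d * nv V E d"
    using sum.inter_filter[OF finV, of "\<lambda>_. d" "\<lambda>v. deg E v = d"] by (simp add: nv_def mult.commute)
  finally show ?thesis .
qed

lemma deg_eq: "d * nv V E d = (\<Sum>e\<in>E. (if fst (tau E e) = d then 1 else 0) + (if snd (tau E e) = d then 1 else 0))"
  unfolding handshake[symmetric] by (rule sum.cong[OF refl]) (simp add: card_deg_e)

lemma deg1: "nv V E 1 = 2 * me E 1 1 + me E 1 2 + me E 1 3 + me E 1 4"
  using deg_eq[of 1] sum_expl[of "\<lambda>p. (if fst p = 1 then 1 else 0) + (if snd p = 1 then 1 else (0::nat))"] by simp
lemma deg2: "2 * nv V E 2 = me E 1 2 + 2 * me E 2 2 + me E 2 3 + me E 2 4"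
  using deg_eq[of 2] sum_expl[of "\<lambda>p. (if fst p = 2 then 1 else 0) + (if snd p = 2 then 1 else (0::nat))"] by simp
lemma deg3: "3 * nv V E 3 = me E 1 3 + me E 2 3 + 2 * me E 3 3 + me E 3 4"
  using deg_eq[of 3] sum_expl[of "\<lambda>p. (if fst p = 3 then 1 else 0) + (if snd p = 3 then 1 else (0::nat))"] by simp
lemma deg4: "4 * nv V E 4 = me E 1 4 + me E 2 4 + me E 3 4 + 2 * me E 4 4"
  using deg_eq[of 4] sum_expl[of "\<lambda>p. (if fst p = 4 then 1 else 0) + (if snd p = 4 then 1 else (0::nat))"] by simp

lemma edges_n: "n = me E 1 1 + me E 1 2 + me E 1 3 + me E 1 4 + me E 2 2 + me E 2 3 +
   me E 2 4 + me E 3 3 + me E 3 4 + me E 4 4"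
proof -
  have "n = (\<Sum>e\<in>E. (1::nat))" using cardE by simp
  then show ?thesis using sum_expl[of "\<lambda>p. (1::nat)"] by simp
qed

lemma has_edge: "v \<in> V \<Longrightarrow> \<exists>e\<in>E. v \<in> e"
proof -
  assume v: "v \<in> V"
  have "card V \<ge> 2" using cardV n7 by simp
  then have "V \<noteq> {v}" by auto
  then obtain w where w: "w \<in> V" "w \<noteq> v" using v by blast
  have "(adj E)\<^sup>*\<^sup>* v w" using cu v w unfolding chem_unicyclic_def connected_graph_def by blast
  then show ?thesis
  proof (cases rule: converse_rtranclpE)
    case base then show ?thesis using w by simp
  next
    case (step z) then show ?thesis unfolding adj_def by blast
  qed
qed

lemma deg_V: "v \<in> V \<Longrightarrow> deg E v \<in> {1,2,3,4}"
proof -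
  assume v: "v \<in> V"
  then obtain e where "e \<in> E" "v \<in> e" using has_edge by blast
  then have "1 \<le> deg E v" using deg_ge1 by blast
  moreover have "deg E v \<le> 4" using deg_le4 v by blast
  ultimately show ?thesis by auto
qed

lemma nv_sum: "n = nv V E 1 + nv V E 2 + nv V E 3 + nv V E 4"
proof -
  have g: "deg E ` V \<subseteq> {1,2,3,4}" using deg_V by blast
  have "(\<Sum>d\<in>{1,2,3,4}. \<Sum>v\<in>{x. x \<in> V \<and> deg E x = d}. (1::nat)) = (\<Sum>v\<in>V. 1)"
    by (rule sum.group[OF finV _ g]) simp
  then show ?thesis using cardV by (simp add: nv_def mult.commute)
qed

lemma me_out: "i \<le> j \<Longrightarrow> (i,j) \<notin> PP \<Longrightarrow> me E i j = 0"
proof -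
  assume ij: "i \<le> j" "(i,j) \<notin> PP"
  have emp: "{e \<in> E. \<exists>u v. e = {u, v} \<and> u \<noteq> v \<and> deg E u = i \<and> deg E v = j} = {}"
  proof (rule ccontr)
    assume "{e \<in> E. \<exists>u v. e = {u, v} \<and> u \<noteq> v \<and> deg E u = i \<and> deg E v = j} \<noteq> {}"
    then obtain u v where uv: "{u,v} \<in> E" "deg E u = i" "deg E v = j" by blast
    have "1 \<le> i" "j \<le> 4" using deg_ge1[OF uv(1)] deg_le4'[OF uv(1)] uv by auto
    then show False using in_PP ij by blast
  qed
  show ?thesis unfolding me_def by (simp only: emp card.empty)
qed

lemma oz_intro: "(\<forall>p\<in>PP. p \<notin> L \<longrightarrow> me E (fst p) (snd p) = 0) \<Longrightarrow> others_zero E L"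
  unfolding others_zero_def using me_out by fastforce

lemma me11: "me E 1 1 = 0"
proof (rule ccontr)
  assume "me E 1 1 \<noteq> 0"
  then have "card {e \<in> E. tau E e = (1,1)} \<noteq> 0" using me_eq[of 1 1] by simp
  then have "{e \<in> E. tau E e = (1,1)} \<noteq> {}"
  proof (rule contrapos_nn)
    assume h: "{e \<in> E. tau E e = (1,1)} = {}"
    show "card {e \<in> E. tau E e = (1,1)} = 0" by (simp only: h card.empty)
  qed
  then obtain e where e: "e \<in> E" "tau E e = (1,1)" by blast
  then obtain u v where uv: "u \<noteq> v" "e = {u,v}" using edge by blast
  have du: "deg E u = 1" "deg E v = 1" using e uv by (auto simp: tau_pair min_def max_def split: if_splits)
  have key: "y \<in> {u,v} \<Longrightarrow> {y,z} \<in> E \<Longrightarrow> z \<in> {u,v}" for y z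
  proof -
    assume y: "y \<in> {u,v}" and yz: "{y,z} \<in> E"
    have "card {x \<in> E. y \<in> x} = 1" using du y unfolding deg_def by auto
    then obtain x where x: "{x \<in> E. y \<in> x} = {x}" using card_1_singletonE by blast
    have "{y,z} \<in> {x \<in> E. y \<in> x}" "{u,v} \<in> {x \<in> E. y \<in> x}" using yz e uv y by auto
    then have "{y,z} = {u,v}" using x by auto
    then show ?thesis by auto
  qed
  have reach: "(adj E)\<^sup>*\<^sup>* u w \<Longrightarrow> w \<in> {u,v}" for w
  proof (induction rule: rtranclp_induct)
    case base then show ?case by simp
  next
    case (step y z) then show ?case using key unfolding adj_def by blast
  qed
  have uV: "u \<in> V" using e uv EPow by auto
  have "V \<subseteq> {u,v}"
  proof
    fix w assume "w \<in> V"
    then have "(adj E)\<^sup>*\<^sup>* u w" using cu uV unfolding chem_unicyclic_def connected_graph_def by blast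
    then show "w \<in> {u,v}" using reach by blast
  qed
  then have "card V \<le> card {u,v}" by (intro card_mono) simp_all
  then have "card V \<le> 2" using uv(1) by simp
  then show False using cardV n7 by simp
qed

lemma mdd: "nv V E d \<le> 2 \<Longrightarrow> me E d d \<le> 1" and mdd0: "nv V E d \<le> 1 \<Longrightarrow> me E d d = 0"
proof -
  let ?S = "{v \<in> V. deg E v = d}"
  have fS: "finite ?S" using finV by simp
  have sub: "e \<in> E \<Longrightarrow> tau E e = (d,d) \<Longrightarrow> e \<subseteq> ?S \<and> card e = 2" for e
  proof -
    assume e: "e \<in> E" "tau E e = (d,d)"
    then obtain u v where uv: "u \<in> V" "v \<in> V" "u \<noteq> v" "e = {u,v}" using edge by blast
    then show ?thesis using e by (auto simp: tau_pair min_def max_def split: if_splits)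
  qed
  {
    assume "nv V E d \<le> 2"
    then have c: "card ?S \<le> 2" by (simp add: nv_def mult.commute)
    have "{e \<in> E. tau E e = (d,d)} \<subseteq> {?S}"
    proof
      fix e assume "e \<in> {e \<in> E. tau E e = (d,d)}"
      then have "e \<subseteq> ?S" "card e = 2" using sub by auto
      then have "e = ?S" using card_seteq[OF fS \<open>e \<subseteq> ?S\<close>] c by simp
      then show "e \<in> {?S}" by simp
    qed
    then have "card {e \<in> E. tau E e = (d,d)} \<le> card {?S}" by (intro card_mono) simp_all
    then have "card {e \<in> E. tau E e = (d,d)} \<le> 1" by simp
    then show "me E d d \<le> 1" using me_eq[of d d] by simp
  }
  {
    assume "nv V E d \<le> 1"
    then have c: "card ?S \<le> 1" by (simp add: nv_def mult.commute)
    have emp: "{e \<in> E. tau E e = (d,d)} = {}"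
    proof (rule ccontr)
      assume "{e \<in> E. tau E e = (d,d)} \<noteq> {}"
      then obtain e where "e \<subseteq> ?S" "card e = 2" using sub by blast
      then have "card e \<le> card ?S" using fS card_mono by blast
      then show False using c \<open>card e = 2\<close> by simp
    qed
    have "card {e \<in> E. tau E e = (d,d)} = 0" by (simp only: emp card.empty)
    then show "me E d d = 0" using me_eq[of d d] by simp
  }
qed

lemma sombor_expl: "sombor E = real (me E 1 1) * sqrt 2 + real (me E 1 2) * sqrt 5 + real (me E 1 3) * sqrt 10 +
   real (me E 1 4) * sqrt 17 + real (me E 2 2) * sqrt 8 + real (me E 2 3) * sqrt 13 +
   real (me E 2 4) * sqrt 20 + real (me E 3 3) * sqrt 18 + real (me E 3 4) * sqrt 25 +
   real (me E 4 4) * sqrt 32"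
proof -
  have "sombor E = (\<Sum>e\<in>E. sqrt (real (fst (tau E e)) ^ 2 + real (snd (tau E e)) ^ 2))"
    unfolding sombor_def
  proof (rule sum.cong[OF refl])
    fix e assume "e \<in> E"
    then obtain u v where uv: "u \<noteq> v" "e = {u,v}" using edge by blast
    show "sqrt (\<Sum>w\<in>e. real (deg E w) ^ 2) = sqrt (real (fst (tau E e)) ^ 2 + real (snd (tau E e)) ^ 2)"
      using uv by (auto simp: tau_pair min_def max_def add.commute)
  qed
  then show ?thesis using sum_expl[of "\<lambda>p. sqrt (real (fst p) ^ 2 + real (snd p) ^ 2)"] by simp
qed

end


lemma bndl: "(a::real) \<le> c * s \<Longrightarrow> a * real m \<le> c * (real m * s)"
proof -
  assume h: "a \<le> c * s"
  have "real m * a \<le> real m * (c * s)" using h by (simp add: mult_left_mono)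
  then show ?thesis by (simp add: algebra_simps)
qed

lemma bndh: "c * s \<le> (b::real) \<Longrightarrow> c * (real m * s) \<le> b * real m"
proof -
  assume h: "c * s \<le> b"
  have "real m * (c * s) \<le> real m * b" using h by (simp add: mult_left_mono)
  then show ?thesis by (simp add: algebra_simps)
qed

lemma sqlo: "(a / 100000)\<^sup>2 \<le> x \<Longrightarrow> (a::real) \<le> 100000 * sqrt x"
proof -
  assume "(a / 100000)\<^sup>2 \<le> x"
  then have "a / 100000 \<le> sqrt x" by (rule real_le_rsqrt)
  then show ?thesis by (simp add: field_simps)
qed

lemma sqhi: "0 \<le> b \<Longrightarrow> x \<le> (b / 100000)\<^sup>2 \<Longrightarrow> 100000 * sqrt x \<le> (b::real)"
proof -
  assume "0 \<le> b" "x \<le> (b / 100000)\<^sup>2"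
  then have "sqrt x \<le> b / 100000" by (intro real_le_lsqrt) simp_all
  then show ?thesis by (simp add: field_simps)
qed

lemma sqb:
  "223606 \<le> 100000 * sqrt 5" "100000 * sqrt 5 \<le> 223607"
  "282842 \<le> 100000 * sqrt 8" "100000 * sqrt 8 \<le> 282843"
  "316227 \<le> 100000 * sqrt 10" "100000 * sqrt 10 \<le> 316228"
  "360555 \<le> 100000 * sqrt 13" "100000 * sqrt 13 \<le> 360556"
  "412310 \<le> 100000 * sqrt 17" "100000 * sqrt 17 \<le> 412311"
  "424264 \<le> 100000 * sqrt 18" "100000 * sqrt 18 \<le> 424265"
  "447213 \<le> 100000 * sqrt 20" "100000 * sqrt 20 \<le> 447214"
  "499999 \<le> 100000 * sqrt 25" "100000 * sqrt 25 \<le> 500001"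
  "565685 \<le> 100000 * sqrt 32" "100000 * sqrt 32 \<le> 565686"
proof -
  have s0: "223606 \<le> 100000 * sqrt 5" by (rule sqlo) (simp add: power2_eq_square)
  have s1: "100000 * sqrt 5 \<le> 223607" by (rule sqhi) (simp_all add: power2_eq_square)
  have s2: "282842 \<le> 100000 * sqrt 8" by (rule sqlo) (simp add: power2_eq_square)
  have s3: "100000 * sqrt 8 \<le> 282843" by (rule sqhi) (simp_all add: power2_eq_square)
  have s4: "316227 \<le> 100000 * sqrt 10" by (rule sqlo) (simp add: power2_eq_square)
  have s5: "100000 * sqrt 10 \<le> 316228" by (rule sqhi) (simp_all add: power2_eq_square)
  have s6: "360555 \<le> 100000 * sqrt 13" by (rule sqlo) (simp add: power2_eq_square)
  have s7: "100000 * sqrt 13 \<le> 360556" by (rule sqhi) (simp_all add: power2_eq_square)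
  have s8: "412310 \<le> 100000 * sqrt 17" by (rule sqlo) (simp add: power2_eq_square)
  have s9: "100000 * sqrt 17 \<le> 412311" by (rule sqhi) (simp_all add: power2_eq_square)
  have s10: "424264 \<le> 100000 * sqrt 18" by (rule sqlo) (simp add: power2_eq_square)
  have s11: "100000 * sqrt 18 \<le> 424265" by (rule sqhi) (simp_all add: power2_eq_square)
  have s12: "447213 \<le> 100000 * sqrt 20" by (rule sqlo) (simp add: power2_eq_square)
  have s13: "100000 * sqrt 20 \<le> 447214" by (rule sqhi) (simp_all add: power2_eq_square)
  have s14: "499999 \<le> 100000 * sqrt 25" by (rule sqlo) (simp add: power2_eq_square)
  have s15: "100000 * sqrt 25 \<le> 500001" by (rule sqhi) (simp_all add: power2_eq_square)
  have s16: "565685 \<le> 100000 * sqrt 32" by (rule sqlo) (simp add: power2_eq_square)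
  have s17: "100000 * sqrt 32 \<le> 565686" by (rule sqhi) (simp_all add: power2_eq_square)
  show "223606 \<le> 100000 * sqrt 5" "100000 * sqrt 5 \<le> 223607" "282842 \<le> 100000 * sqrt 8" "100000 * sqrt 8 \<le> 282843" "316227 \<le> 100000 * sqrt 10" "100000 * sqrt 10 \<le> 316228" "360555 \<le> 100000 * sqrt 13" "100000 * sqrt 13 \<le> 360556" "412310 \<le> 100000 * sqrt 17" "100000 * sqrt 17 \<le> 412311" "424264 \<le> 100000 * sqrt 18" "100000 * sqrt 18 \<le> 424265" "447213 \<le> 100000 * sqrt 20" "100000 * sqrt 20 \<le> 447214" "499999 \<le> 100000 * sqrt 25" "100000 * sqrt 25 \<le> 500001" "565685 \<le> 100000 * sqrt 32" "100000 * sqrt 32 \<le> 565686"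
    using s0 s1 s2 s3 s4 s5 s6 s7 s8 s9 s10 s11 s12 s13 s14 s15 s16 s17 by auto
qed

context CU begin

lemma me11': "me E (Suc 0) (Suc 0) = 0" using me11 by (simp only: One_nat_def)

lemma oz_get: "others_zero E L \<Longrightarrow> i \<le> j \<Longrightarrow> (i,j) \<notin> L \<Longrightarrow> me E i j = 0"
  by (simp add: others_zero_def)

lemma so_a1: "alpha1 n V E \<Longrightarrow> sombor E = real n * sqrt 8"
proof -
  assume a: "alpha1 n V E"
  have oz: "others_zero E {(2,2)}" and m: "me E 2 2 = n" using a by (simp_all add: alpha1_def)
  have z: "me E 1 1 = 0" "me E 1 2 = 0" "me E 1 3 = 0" "me E 1 4 = 0" "me E 2 3 = 0" "me E 2 4 = 0"
    "me E 3 3 = 0" "me E 3 4 = 0" "me E 4 4 = 0" by (simp_all add: oz_get[OF oz])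
  show ?thesis using sombor_expl z m by simp
qed

lemma so_a3: "alpha3 n V E \<Longrightarrow> sombor E = sqrt 5 + 3 * sqrt 13 + (real n - 4) * sqrt 8"
proof -
  assume a: "alpha3 n V E"
  have oz: "others_zero E {(1,2),(2,3),(2,2)}" and m: "me E 1 2 = 1" "me E 2 3 = 3" "me E 2 2 = n - 4"
    using a by (simp_all add: alpha3_def)
  have z: "me E 1 1 = 0" "me E 1 3 = 0" "me E 1 4 = 0" "me E 2 4 = 0"
    "me E 3 3 = 0" "me E 3 4 = 0" "me E 4 4 = 0" by (simp_all add: oz_get[OF oz])
  have n4: "real (n - 4) = real n - 4" using n7 by simp
  show ?thesis using sombor_expl z m n4 by simp
qed

lemma so_a2: "alpha2 n V E \<Longrightarrow> sombor E = sqrt 10 + 2 * sqrt 13 + (real n - 3) * sqrt 8"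
proof -
  assume a: "alpha2 n V E"
  have oz: "others_zero E {(1,3),(2,3),(2,2)}" and m: "me E 1 3 = 1" "me E 2 3 = 2" "me E 2 2 = n - 3"
    using a by (simp_all add: alpha2_def)
  have z: "me E 1 1 = 0" "me E 1 2 = 0" "me E 1 4 = 0" "me E 2 4 = 0"
    "me E 3 3 = 0" "me E 3 4 = 0" "me E 4 4 = 0" by (simp_all add: oz_get[OF oz])
  have n4: "real (n - 3) = real n - 3" using n7 by simp
  show ?thesis using sombor_expl z m n4 by simp
qed

lemma so_a9: "alpha9 n V E \<Longrightarrow> sombor E = 2 * sqrt 5 + 4 * sqrt 13 + sqrt 18 + (real n - 7) * sqrt 8"
proof -
  assume a: "alpha9 n V E"
  have oz: "others_zero E {(1,2),(2,3),(3,3),(2,2)}" and m: "me E 1 2 = 2" "me E 2 3 = 4"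
     "me E 3 3 = 1" "me E 2 2 = n - 7"
    using a by (simp_all add: alpha9_def)
  have z: "me E 1 1 = 0" "me E 1 3 = 0" "me E 1 4 = 0" "me E 2 4 = 0"
    "me E 3 4 = 0" "me E 4 4 = 0" by (simp_all add: oz_get[OF oz])
  have n4: "real (n - 7) = real n - 7" using n7 by simp
  show ?thesis using sombor_expl z m n4 by simp
qed

lemma so_G:
  assumes na1: "\<not> alpha1 n V E" and na2: "\<not> alpha2 n V E" and na3: "\<not> alpha3 n V E"
    and na9: "\<not> alpha9 n V E"
  shows "2 * sqrt 5 + 4 * sqrt 13 + sqrt 18 + (real n - 7) * sqrt 8 < sombor E"
proof -
  have en': "real n = real (me E 1 1) + real (me E 1 2) + real (me E 1 3) + real (me E 1 4) +
     real (me E 2 2) + real (me E 2 3) + real (me E 2 4) + real (me E 3 3) + real (me E 3 4) +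
     real (me E 4 4)" using arg_cong[where f=real, OF edges_n] by simp
  have L: "100000 * sombor E - 100000 * (real n * sqrt 8) \<ge> -59237 * real (me E 1 2) + 33384 * real (me E 1 3)
     + 129467 * real (me E 1 4) + 77712 * real (me E 2 3) + 164370 * real (me E 2 4)
     + 141421 * real (me E 3 3) + 217156 * real (me E 3 4) + 282842 * real (me E 4 4)"
  proof -
    have e8: "real n * sqrt 8 = real (me E 1 1) * sqrt 8 + real (me E 1 2) * sqrt 8 + real (me E 1 3) * sqrt 8 + real (me E 1 4) * sqrt 8 +
     real (me E 2 2) * sqrt 8 + real (me E 2 3) * sqrt 8 + real (me E 2 4) * sqrt 8 + real (me E 3 3) * sqrt 8 + real (me E 3 4) * sqrt 8 +
     real (me E 4 4) * sqrt 8" unfolding en' by (simp add: distrib_right)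
    have z1: "real (me E 1 1) * sqrt 2 = 0" "real (me E 1 1) * sqrt 8 = 0" using me11 by simp_all
    note h8 = bndh[OF sqb(4)]
    show ?thesis using sombor_expl z1 e8
      h8[of "me E 1 2"] h8[of "me E 1 3"] h8[of "me E 1 4"] h8[of "me E 2 3"] h8[of "me E 2 4"]
      h8[of "me E 3 3"] h8[of "me E 3 4"] h8[of "me E 4 4"]
      bndl[OF sqb(1), of "me E 1 2"] bndl[OF sqb(5), of "me E 1 3"] bndl[OF sqb(9), of "me E 1 4"]
      bndl[OF sqb(7), of "me E 2 3"] bndl[OF sqb(13), of "me E 2 4"] bndl[OF sqb(11), of "me E 3 3"]
      bndl[OF sqb(15), of "me E 3 4"] bndl[OF sqb(17), of "me E 4 4"]
      by linarith
  qed
  have T: "200000 * sqrt 5 + 400000 * sqrt 13 + 100000 * sqrt 18 - 700000 * sqrt 8 \<le> 333810"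
    using sqb by linarith
  have Id: "(real n - 7) * sqrt 8 = real n * sqrt 8 - 7 * sqrt 8" by (simp add: algebra_simps)
  have r1: "real (nv V E 1) = 2 * real (me E 1 1) + real (me E 1 2) + real (me E 1 3) + real (me E 1 4)"
    using arg_cong[where f=real, OF deg1] by simp
  have r2: "2 * real (nv V E 2) = real (me E 1 2) + 2 * real (me E 2 2) + real (me E 2 3) + real (me E 2 4)"
    using arg_cong[where f=real, OF deg2] by simp
  have r3: "3 * real (nv V E 3) = real (me E 1 3) + real (me E 2 3) + 2 * real (me E 3 3) + real (me E 3 4)"
    using arg_cong[where f=real, OF deg3] by simp
  have r4: "4 * real (nv V E 4) = real (me E 1 4) + real (me E 2 4) + real (me E 3 4) + 2 * real (me E 4 4)"
    using arg_cong[where f=real, OF deg4] by simp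
  have rn: "real n = real (nv V E 1) + real (nv V E 2) + real (nv V E 3) + real (nv V E 4)"
    using arg_cong[where f=real, OF nv_sum] by simp
  have m11: "real (me E 1 1) = 0" using me11 by simp
  have hs: "nv V E 1 = nv V E 3 + 2 * nv V E 4"
    using deg1 deg2 deg3 deg4 edges_n nv_sum me11 by linarith
  have rhs: "real (nv V E 1) = real (nv V E 3) + 2 * real (nv V E 4)"
    using arg_cong[where f=real, OF hs] by simp
  have nn: "real (me E 1 2) \<ge> 0" "real (me E 1 3) \<ge> 0" "real (me E 1 4) \<ge> 0" "real (me E 2 3) \<ge> 0"
    "real (me E 2 4) \<ge> 0" "real (me E 3 3) \<ge> 0" "real (me E 3 4) \<ge> 0" "real (me E 4 4) \<ge> 0"
    by simp_all
  have S1: "-59237 * real (me E 1 2) + 33384 * real (me E 1 3)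
     + 129467 * real (me E 1 4) + 77712 * real (me E 2 3) + 164370 * real (me E 2 4)
     + 141421 * real (me E 3 3) + 217156 * real (me E 3 4) + 282842 * real (me E 4 4) \<ge>
     -60000 * real (me E 1 2) + 10000 * real (me E 1 3)
     + 80000 * real (me E 1 4) + 70000 * real (me E 2 3) + 140000 * real (me E 2 4)
     + 140000 * real (me E 3 3) + 210000 * real (me E 3 4) + 280000 * real (me E 4 4)" using nn by linarith
  have S2: "-60000 * real (me E 1 2) + 10000 * real (me E 1 3)
     + 80000 * real (me E 1 4) + 70000 * real (me E 2 3) + 140000 * real (me E 2 4)
     + 140000 * real (me E 3 3) + 210000 * real (me E 3 4) + 280000 * real (me E 4 4) =
     150000 * real (nv V E 3) + 440000 * real (nv V E 4)" using r1 r3 r4 rhs m11 by linarith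
  have LP: "-59237 * real (me E 1 2) + 33384 * real (me E 1 3)
     + 129467 * real (me E 1 4) + 77712 * real (me E 2 3) + 164370 * real (me E 2 4)
     + 141421 * real (me E 3 3) + 217156 * real (me E 3 4) + 282842 * real (me E 4 4) > 333810"
  proof -
    consider (A4) "nv V E 4 \<ge> 1" | (A3) "nv V E 3 \<ge> 3" | (B) "nv V E 4 = 0" "nv V E 3 \<le> 2" by linarith
    then show ?thesis
    proof cases
      case A4
      then have "real (nv V E 4) \<ge> 1" by simp
      moreover have "real (nv V E 3) \<ge> 0" by simp
      ultimately show ?thesis using S1 S2 by linarith
    next
      case A3
      then have "real (nv V E 3) \<ge> 3" by simp
      moreover have "real (nv V E 4) \<ge> 0" by simp
      ultimately show ?thesis using S1 S2 by linarith
    next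
      case B
      have z4: "me E 1 4 = 0" "me E 2 4 = 0" "me E 3 4 = 0" "me E 4 4 = 0" using deg4 B by simp_all
      have n13: "nv V E 1 = nv V E 3" using hs B by simp
      consider (C0) "nv V E 3 = 0" | (C1) "nv V E 3 = 1" | (C2) "nv V E 3 = 2" using B by linarith
      then show ?thesis
      proof cases
        case C0
        then have z: "me E 1 2 = 0" "me E 1 3 = 0" "me E 2 3 = 0" "me E 3 3 = 0"
          using deg1 deg3 n13 by simp_all
        have m22: "me E 2 2 = n" using edges_n z z4 me11 by simp
        have n2: "nv V E 2 = n" using nv_sum n13 C0 B by simp
        have "alpha1 n V E" unfolding alpha1_def
          using cu m22 n2 oz_intro[of "{(2,2)}"] z z4 me11 by (simp add: PP_def)
        then show ?thesis using na1 by simp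
      next
        case C1
        have z33: "me E 3 3 = 0" using mdd0[of 3] C1 by simp
        have n2: "nv V E 2 = n - 2" using nv_sum n13 C1 B by simp
        have e1': "nv V E 1 = me E 1 2 + me E 1 3"
          by (simp only: deg1 me11 z4(1) mult_0_right add_0 add_0_right)
        have e1: "me E 1 2 + me E 1 3 = 1" using e1' n13 C1 by simp
        have e3: "me E 1 3 + me E 2 3 = 3" using deg3 C1 z33 z4 by simp
        show ?thesis
        proof (cases "me E 1 3 = 1")
          case True
          then have z: "me E 1 2 = 0" "me E 2 3 = 2" using e1 e3 by simp_all
          have m22: "me E 2 2 = n - 3" using edges_n z z4 me11 z33 True by simp
          have "alpha2 n V E" unfolding alpha2_def
            using cu m22 n2 C1 n13 B True oz_intro[of "{(1,3),(2,3),(2,2)}"] z z4 me11 z33 by (simp add: PP_def)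
          then show ?thesis using na2 by simp
        next
          case False
          then have z: "me E 1 3 = 0" "me E 1 2 = 1" "me E 2 3 = 3" using e1 e3 by simp_all
          have m22: "me E 2 2 = n - 4" using edges_n z z4 me11 z33 by simp
          have "alpha3 n V E" unfolding alpha3_def
            using cu m22 n2 C1 n13 B oz_intro[of "{(1,2),(2,3),(2,2)}"] z z4 me11 z33 by (simp add: PP_def)
          then show ?thesis using na3 by simp
        qed
      next
        case C2
        have e1': "nv V E 1 = me E 1 2 + me E 1 3"
          by (simp only: deg1 me11 z4(1) mult_0_right add_0 add_0_right)
        have m33: "me E 3 3 \<le> 1" using mdd[of 3] C2 by simp
        have n2: "nv V E 2 = n - 4" using nv_sum n13 C2 B by simp
        have e1: "me E 1 2 + me E 1 3 = 2" using e1' n13 C2 by simp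
        have e3: "me E 1 3 + me E 2 3 + 2 * me E 3 3 = 6" using deg3 C2 z4 by simp
        have ne: "\<not> (me E 3 3 = 1 \<and> me E 1 3 = 0)"
        proof
          assume h: "me E 3 3 = 1 \<and> me E 1 3 = 0"
          then have z: "me E 1 2 = 2" "me E 2 3 = 4" "me E 1 3 = 0" "me E 3 3 = 1" using e1 e3 by simp_all
          have m22: "me E 2 2 = n - 7" using edges_n z z4 me11 me11' by simp
          have "alpha9 n V E" unfolding alpha9_def
            using cu m22 n2 C2 n13 B oz_intro[of "{(1,2),(2,3),(3,3),(2,2)}"] z z4 me11 by (simp add: PP_def)
          then show False using na9 by simp
        qed
        have re1: "real (me E 1 2) + real (me E 1 3) = 2" using arg_cong[where f=real, OF e1] by simp
        have re3: "real (me E 1 3) + real (me E 2 3) + 2 * real (me E 3 3) = 6" using arg_cong[where f=real, OF e3] by simp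
        have rz: "real (me E 1 4) = 0" "real (me E 2 4) = 0" "real (me E 3 4) = 0" "real (me E 4 4) = 0"
          using z4 by simp_all
        have D: "me E 3 3 = 0 \<or> me E 1 3 \<ge> 1"
        proof (cases "me E 3 3 = 0")
          case True then show ?thesis by simp
        next
          case False
          then have "me E 3 3 = 1" using m33 by simp
          then have "me E 1 3 \<noteq> 0" using ne by simp
          then show ?thesis by simp
        qed
        show ?thesis
        proof (cases "me E 3 3 = 0")
          case True
          then have "real (me E 3 3) = 0" by simp
          then show ?thesis using re1 re3 rz nn by linarith
        next
          case False
          then have "me E 1 3 \<ge> 1" using D by simp
          then have "real (me E 1 3) \<ge> 1" by simp
          moreover have "real (me E 3 3) \<le> 1" using m33 by simp
          ultimately show ?thesis using re1 re3 rz nn by linarith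
        qed
      qed
    qed
  qed
  show ?thesis using L T LP Id by linarith
qed

end
theorem theorem3p6:
  fixes n :: nat
    and V1 V2 V3 V4 V :: "'a set"
    and E1 E2 E3 E4 E :: "'a set set"
  assumes "n \<ge> 7"
    and "alpha1 n V1 E1"
    and "alpha3 n V2 E2"
    and "alpha2 n V3 E3"
    and "alpha9 n V4 E4"
    and "chem_unicyclic n V E"
    and "\<not> alpha1 n V E" and "\<not> alpha2 n V E" and "\<not> alpha3 n V E" and "\<not> alpha9 n V E"
  shows "sombor E1 < sombor E2 \<and> sombor E2 < sombor E3 \<and> sombor E3 < sombor E4
         \<and> sombor E4 < sombor E"
proof -
  interpret G1: CU n V1 E1 using assms(1,2) by unfold_locales (simp_all add: alpha1_def)
  interpret G2: CU n V2 E2 using assms(1,3) by unfold_locales (simp_all add: alpha3_def)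
  interpret G3: CU n V3 E3 using assms(1,4) by unfold_locales (simp_all add: alpha2_def)
  interpret G4: CU n V4 E4 using assms(1,5) by unfold_locales (simp_all add: alpha9_def)
  interpret G: CU n V E using assms(1,6) by unfold_locales simp_all
  have s1: "sombor E1 = real n * sqrt 8" using G1.so_a1 assms(2) by simp
  have s2: "sombor E2 = sqrt 5 + 3 * sqrt 13 + (real n - 4) * sqrt 8" using G2.so_a3 assms(3) by simp
  have s3: "sombor E3 = sqrt 10 + 2 * sqrt 13 + (real n - 3) * sqrt 8" using G3.so_a2 assms(4) by simp
  have s4: "sombor E4 = 2 * sqrt 5 + 4 * sqrt 13 + sqrt 18 + (real n - 7) * sqrt 8" using G4.so_a9 assms(5) by simp
  have s5: "2 * sqrt 5 + 4 * sqrt 13 + sqrt 18 + (real n - 7) * sqrt 8 < sombor E"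
    using G.so_G assms(7-10) by simp
  have d12: "sombor E2 - sombor E1 = sqrt 5 + 3 * sqrt 13 - 4 * sqrt 8"
    using s1 s2 by (simp add: algebra_simps)
  have d23: "sombor E3 - sombor E2 = sqrt 10 - sqrt 13 - sqrt 5 + sqrt 8"
    using s2 s3 by (simp add: algebra_simps)
  have d34: "sombor E4 - sombor E3 = 2 * sqrt 5 + 2 * sqrt 13 + sqrt 18 - sqrt 10 - 4 * sqrt 8"
    using s3 s4 by (simp add: algebra_simps)
  have p12: "sqrt 5 + 3 * sqrt 13 - 4 * sqrt 8 > 0" using sqb(1,4,7) by linarith
  have p23: "sqrt 10 - sqrt 13 - sqrt 5 + sqrt 8 > 0" using sqb(2,3,5,8) by linarith
  have p34: "2 * sqrt 5 + 2 * sqrt 13 + sqrt 18 - sqrt 10 - 4 * sqrt 8 > 0" using sqb(1,4,6,7,11) by linarith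
  have "sombor E1 < sombor E2" using d12 p12 by linarith
  moreover have "sombor E2 < sombor E3" using d23 p23 by linarith
  moreover have "sombor E3 < sombor E4" using d34 p34 by linarith
  moreover have "sombor E4 < sombor E" using s4 s5 by simp
  ultimately show ?thesis by simp
qed

end
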